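(* Let $N>1$ be an integer and let data points $\{(x_n,y_n)\}_{n=0}^N\subset\mathbb{R}^2$ with $0=x_0<x_1<\dots<x_N=1$ be given. Let $a\in\mathbb{R}$ with $|a|<1$, and for $n=1,\dots,N$ let $g_n:[0,1]\to\mathbb{R}$ be continuous. Define $w_n(x,y)=(L_n(x),F_n(x,y))$ with $L_n(x)=\frac{x+n-1}{N}$ and $F_n(x,y)=ay+g_n(x)$, and assume $L_n(x_0)=x_{n-1}$, $L_n(x_N)=x_n$, $F_n(x_0,y_0)=y_{n-1}$, $F_n(x_N,y_N)=y_n$ for all $n=1,\dots,N$. Let $f^*:[0,1]\to\mathbb{R}$ be the continuous function that interpolates the data (i.e. $f^*(x_n)=y_n$) and whose graph is the attractor of the IFS $F=(\mathbb{R}^2;w_1,\dots,w_N)$. Define $g$ by $$g(x)=\begin{cases} g_n(L_n^{-1}(x)) & \text{if } x\in[x_{n-1},x_n),\ n=1,\dots,N,\\ g_N(1) & \text{if } x=1,\\ g(x-1) & \text{if } x\in(1,\infty).\end{cases}$$ Then $f^*$ is the unique solution of the functional equation $f(x)-af(Nx)=g(x)$ in the space $L^\infty(\mathbb{R})\cap L^2([0,1])\cap\mathcal{P}$.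
   Context: $\mathcal{P}$ denotes the set of functions on $\mathbb{R}$ of period $1$; $L^\infty(\mathbb{R})\cap L^2([0,1])\cap\mathcal{P}$ is the space of essentially bounded period-1 functions on $\mathbb{R}$ (square integrable on $[0,1]$), with functions identified when equal almost everywhere; $f^*$ and $g$ are regarded as elements of this space via their period-1 extensions, and uniqueness is up to equality almost everywhere. The attractor of an IFS $(\mathbb{R}^2;w_1,\dots,w_N)$ is the unique nonempty compact set $A$ with $A=\bigcup_{n=1}^N w_n(A)$; under the stated assumptions it exists and is the graph of a continuous function on $[0,1]$ interpolating the data. *)

theory Defs
  imports "HOL-Analysis.Analysis"
begin

definition ifs_L :: "nat \<Rightarrow> nat \<Rightarrow> real \<Rightarrow> real" where
  "ifs_L N n x = (x + real n - 1) / real N"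

definition ifs_F :: "real \<Rightarrow> (nat \<Rightarrow> real \<Rightarrow> real) \<Rightarrow> nat \<Rightarrow> real \<Rightarrow> real \<Rightarrow> real" where
  "ifs_F a gs n x y = a * y + gs n x"

definition ifs_w :: "nat \<Rightarrow> real \<Rightarrow> (nat \<Rightarrow> real \<Rightarrow> real) \<Rightarrow> nat \<Rightarrow> real \<times> real \<Rightarrow> real \<times> real" where
  "ifs_w N a gs n p = (ifs_L N n (fst p), ifs_F a gs n (fst p) (snd p))"

definition is_attractor :: "(nat \<Rightarrow> 'a::metric_space \<Rightarrow> 'a) \<Rightarrow> nat set \<Rightarrow> 'a set \<Rightarrow> bool" where
  "is_attractor W I A \<longleftrightarrow>
     A \<noteq> {} \<and> compact A \<and> A = (\<Union>i\<in>I. W i ` A) \<and>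
     (\<forall>B. B \<noteq> {} \<and> compact B \<and> B = (\<Union>i\<in>I. W i ` B) \<longrightarrow> B = A)"

text \<open>g on [0,1): g_n(L_n^{-1}(x)) for x in [x_{n-1}, x_n); L_n^{-1}(x) = N x - n + 1.\<close>
definition g_piece :: "nat \<Rightarrow> (nat \<Rightarrow> real) \<Rightarrow> (nat \<Rightarrow> real \<Rightarrow> real) \<Rightarrow> real \<Rightarrow> real" where
  "g_piece N xs gs x =
     (let n = (THE n. 1 \<le> n \<and> n \<le> N \<and> xs (n - 1) \<le> x \<and> x < xs n)
      in gs n (real N * x - real n + 1))"

text \<open>The function g of the paper: g_piece on [0,1), g_N(1) at 1, g(x) = g(x-1) for x > 1;
  regarded as a period-1 function on the whole real line.\<close>
definition g_fun :: "nat \<Rightarrow> (nat \<Rightarrow> real) \<Rightarrow> (nat \<Rightarrow> real \<Rightarrow> real) \<Rightarrow> real \<Rightarrow> real" where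
  "g_fun N xs gs x =
     (if x < 0 then g_piece N xs gs (frac x)
      else if x < 1 then g_piece N xs gs x
      else (let t = x - (of_int \<lceil>x\<rceil> - 1) in
            if t = 1 then gs N 1 else g_piece N xs gs t))"

definition per_ext :: "(real \<Rightarrow> real) \<Rightarrow> real \<Rightarrow> real" where
  "per_ext f x = f (frac x)"

text \<open>The space L^\<infinity>(R) \<inter> L^2([0,1]) \<inter> P (representatives; equality a.e. handled in statement).\<close>
definition LinfL2P :: "(real \<Rightarrow> real) set" where
  "LinfL2P = {f. f \<in> borel_measurable lebesgue \<and>
                 (\<exists>B. AE x in lebesgue. \<bar>f x\<bar> \<le> B) \<and>
                 set_integrable lebesgue {0..1} (\<lambda>x. (f x)\<^sup>2) \<and>
                 (\<forall>x. f (x + 1) = f x)}"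

end

theory Submission
  imports Defs
begin

lemma AE_scale:
  assumes "AE x in lebesgue. P x" "c \<noteq> (0::real)"
  shows "AE x in lebesgue. P (c*x)"
proof -
  obtain S where S: "S \<in> null_sets lebesgue" "{x. \<not>P x} \<subseteq> S"
    using assms(1) by (auto simp: eventually_ae_filter)
  have neg: "negligible ((\<lambda>x. inverse c * x) ` S)"
    apply (rule negligible_differentiable_image_negligible)
    using S by (auto simp: negligible_iff_null_sets intro!: derivative_intros)
  have "{x. \<not> P (c*x)} \<subseteq> (\<lambda>x. inverse c * x) ` S"
  proof
    fix x assume "x \<in> {x. \<not> P (c*x)}"
    then have "c*x \<in> S" using S(2) by auto
    moreover have "x = inverse c * (c*x)" using assms(2) by simp
    ultimately show "x \<in> (\<lambda>x. inverse c * x) ` S" by (rule rev_image_eqI)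
  qed
  then show ?thesis using neg by (auto simp: eventually_ae_filter negligible_iff_null_sets)
qed


theorem theorem4p1:
  fixes N :: nat and xs ys :: "nat \<Rightarrow> real" and a :: real
    and gs :: "nat \<Rightarrow> real \<Rightarrow> real" and fstar :: "real \<Rightarrow> real"
  assumes N_gt: "N > 1"
    and x0: "xs 0 = 0" and xN: "xs N = 1"
    and x_mono: "\<And>n. n < N \<Longrightarrow> xs n < xs (Suc n)"
    and a_lt: "\<bar>a\<bar> < 1"
    and g_cont: "\<And>n. n \<in> {1..N} \<Longrightarrow> continuous_on {0..1} (gs n)"
    and L_left: "\<And>n. n \<in> {1..N} \<Longrightarrow> ifs_L N n (xs 0) = xs (n - 1)"
    and L_right: "\<And>n. n \<in> {1..N} \<Longrightarrow> ifs_L N n (xs N) = xs n"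
    and F_left: "\<And>n. n \<in> {1..N} \<Longrightarrow> ifs_F a gs n (xs 0) (ys 0) = ys (n - 1)"
    and F_right: "\<And>n. n \<in> {1..N} \<Longrightarrow> ifs_F a gs n (xs N) (ys N) = ys n"
    and f_cont: "continuous_on {0..1} fstar"
    and f_interp: "\<And>n. n \<le> N \<Longrightarrow> fstar (xs n) = ys n"
    and f_attr: "is_attractor (ifs_w N a gs) {1..N} ((\<lambda>x. (x, fstar x)) ` {0..1})"
  shows "per_ext fstar \<in> LinfL2P
         \<and> (AE x in lebesgue. per_ext fstar x - a * per_ext fstar (real N * x) = g_fun N xs gs x)
         \<and> (\<forall>f \<in> LinfL2P.
              (AE x in lebesgue. f x - a * f (real N * x) = g_fun N xs gs x)
              \<longrightarrow> (AE x in lebesgue. f x = per_ext fstar x))"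
proof -
  have Npos: "real N > 0" using N_gt by simp
  have xs_eq: "xs n = real n / real N" if "n \<le> N" for n
  proof (cases "n = 0")
    case True then show ?thesis using x0 by simp
  next
    case False
    then have "n \<in> {1..N}" using that by auto
    from L_right[OF this] show ?thesis using xN by (simp add: ifs_L_def)
  qed
  have feq: "fstar (ifs_L N n t) = a * fstar t + gs n t" if n: "n \<in> {1..N}" and t: "t \<in> {0..1}" for n t
  proof -
    let ?A = "(\<lambda>x. (x, fstar x)) ` {0..1}"
    have A: "?A = (\<Union>i\<in>{1..N}. ifs_w N a gs i ` ?A)" using f_attr unfolding is_attractor_def by blast
    have "ifs_w N a gs n (t, fstar t) \<in> ?A"
      using n t by (subst A) blast
    then obtain s where "s \<in> {0..1}" "ifs_w N a gs n (t, fstar t) = (s, fstar s)" by auto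
    then show ?thesis by (auto simp: ifs_w_def ifs_F_def)
  qed
  define p where "p = per_ext fstar"
  define g where "g = g_fun N xs gs"
  have eq01: "p x - a * p (real N * x) = g_piece N xs gs x" if x: "0 \<le> x" "x < 1" for x
  proof -
    define k where "k = nat \<lfloor>real N * x\<rfloor>"
    have fl0: "\<lfloor>real N * x\<rfloor> \<ge> 0" using x by simp
    have kfl: "real k = real_of_int \<lfloor>real N * x\<rfloor>" using fl0 unfolding k_def by simp
    have k1: "real k \<le> real N * x" "real N * x < real k + 1" using kfl by linarith+
    have "real N * x < real N" using x Npos by simp
    then have kN: "k < N" using k1 by linarith
    define t where "t = real N * x - real k"
    have t: "0 \<le> t" "t < 1" using k1 unfolding t_def by auto
    have n1: "Suc k \<in> {1..N}" using kN by auto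
    have L: "ifs_L N (Suc k) t = x" using Npos unfolding ifs_L_def t_def by (simp add: field_simps)
    have fx: "fstar x = a * fstar t + gs (Suc k) t" using feq[OF n1, of t] t L by simp
    have px: "p x = fstar x" using x unfolding p_def per_ext_def by simp
    have "frac (real N * x) = t" unfolding t_def frac_def using kfl by simp
    then have pNx: "p (real N * x) = fstar t" unfolding p_def per_ext_def by simp
    have theN: "(THE n. 1 \<le> n \<and> n \<le> N \<and> xs (n - 1) \<le> x \<and> x < xs n) = Suc k"
    proof (rule the_equality)
      show "1 \<le> Suc k \<and> Suc k \<le> N \<and> xs (Suc k - 1) \<le> x \<and> x < xs (Suc k)"
        using kN k1 Npos by (simp add: xs_eq field_simps)
    next
      fix m assume m: "1 \<le> m \<and> m \<le> N \<and> xs (m - 1) \<le> x \<and> x < xs m"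
      then have "real (m - 1) / real N \<le> x" "x < real m / real N" using xs_eq by auto
      then have "real (m - 1) \<le> real N * x" "real N * x < real m" using Npos by (simp_all add: field_simps)
      moreover have "real (m - 1) = real m - 1" using m by simp
      ultimately have "\<lfloor>real N * x\<rfloor> = int m - 1" by (simp add: floor_eq_iff)
      then have "k = m - 1" unfolding k_def by auto
      then show "m = Suc k" using m by simp
    qed
    have gp: "g_piece N xs gs x = gs (Suc k) t"
      unfolding g_piece_def Let_def theN t_def by simp
    show ?thesis using px pNx fx gp by simp
  qed
  have eqall: "p x - a * p (real N * x) = g x" if x: "x \<notin> \<int>" for x
  proof -
    have fr: "0 < frac x" "frac x < 1" using x frac_lt_1 by auto
    have "p x = p (frac x)" unfolding p_def per_ext_def by simp
    moreover have "p (real N * x) = p (real N * frac x)"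
    proof -
      have e: "real N * x = real N * frac x + real N * of_int \<lfloor>x\<rfloor>"
        unfolding frac_def by (simp add: algebra_simps)
      have "real N * of_int \<lfloor>x\<rfloor> \<in> \<int>" by simp
      then have "frac (real N * x) = frac (real N * frac x)"
        by (subst e) (rule frac_add_int_right)
      then show ?thesis unfolding p_def per_ext_def by simp
    qed
    moreover have "g x = g_piece N xs gs (frac x)"
    proof -
      have c1: "x \<ge> 1 \<Longrightarrow> x - (real_of_int \<lceil>x\<rceil> - 1) = frac x"
      proof -
        have "\<lceil>x\<rceil> = \<lfloor>x\<rfloor> + 1"
          unfolding ceiling_eq_iff using fr unfolding frac_def by (simp; linarith)
        then show ?thesis unfolding frac_def by simp
      qed
      show ?thesis unfolding g_def g_fun_def using c1 fr by (auto simp: Let_def)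
    qed
    ultimately show ?thesis using eq01[of "frac x"] fr by simp
  qed
  have ZZ: "(\<int>::real set) \<in> null_sets lebesgue"
    by (simp add: countable_imp_null_set_lborel countable_int null_sets_completionI)
  have AEnZ: "AE x in lebesgue. (x::real) \<notin> \<int>"
    unfolding eventually_ae_filter using ZZ by blast
  have AEp: "AE x in lebesgue. p x - a * p (real N * x) = g x"
    using AEnZ by eventually_elim (rule eqall)
  obtain M where M: "\<And>t. t \<in> {0..1} \<Longrightarrow> \<bar>fstar t\<bar> \<le> M"
    using compact_imp_bounded[OF compact_continuous_image[OF f_cont compact_Icc]]
    unfolding bounded_iff by (auto simp del: atLeastAtMost_iff)
  have pM: "\<bar>p x\<bar> \<le> M" for x
    unfolding p_def per_ext_def using M[of "frac x"] frac_lt_1[of x] by simp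
  have meas: "p \<in> borel_measurable lebesgue"
  proof -
    define cl where "cl = (\<lambda>y::real. max 0 (min 1 y))"
    have clc: "continuous_on UNIV cl" unfolding cl_def by (intro continuous_intros)
    have "continuous_on UNIV (fstar \<circ> cl)"
      by (rule continuous_on_compose[OF clc]) (rule continuous_on_subset[OF f_cont], auto simp: cl_def)
    moreover have "(\<lambda>x. x - real_of_int \<lfloor>x\<rfloor>) \<in> borel_measurable borel"
      using borel_measurable_real_floor by measurable
    ultimately have "(\<lambda>x. (fstar \<circ> cl) (x - real_of_int \<lfloor>x\<rfloor>)) \<in> borel_measurable borel"
      by (rule borel_measurable_continuous_on)
    moreover have "(\<lambda>x. (fstar \<circ> cl) (x - real_of_int \<lfloor>x\<rfloor>)) = p"
    proof
      fix x
      have "cl (frac x) = frac x" unfolding cl_def using frac_lt_1[of x] by simp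
      then show "(fstar \<circ> cl) (x - real_of_int \<lfloor>x\<rfloor>) = p x"
        unfolding p_def per_ext_def frac_def by simp
    qed
    ultimately have "p \<in> borel_measurable borel" by simp
    then show ?thesis by (metis measurable_lborel2 measurable_completion)
  qed
  have pin: "p \<in> LinfL2P"
    unfolding LinfL2P_def
  proof (intro CollectI conjI allI)
    show "p \<in> borel_measurable lebesgue" by (rule meas)
    show "\<exists>B. AE x in lebesgue. \<bar>p x\<bar> \<le> B" using pM by auto
    show "p (x + 1) = p x" for x unfolding p_def per_ext_def by (simp add: frac_1_eq)
    show "set_integrable lebesgue {0..1} (\<lambda>x. (p x)\<^sup>2)"
      unfolding set_integrable_def
    proof (rule integrableI_bounded_set[where A="{0..1}" and B="M^2"])
      show "{0..1::real} \<in> sets lebesgue" by simp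
      show "(\<lambda>x. indicat_real {0..1} x *\<^sub>R (p x)\<^sup>2) \<in> borel_measurable lebesgue"
        by (intro borel_measurable_scaleR borel_measurable_indicator borel_measurable_power meas) simp
      show "emeasure lebesgue {0..1::real} < \<infinity>" by simp
      show "AE x in lebesgue. x \<in> {0..1} \<longrightarrow> norm (indicat_real {0..1} x *\<^sub>R (p x)\<^sup>2) \<le> M^2"
      proof (intro AE_I2 impI)
        fix x
        have "\<bar>p x\<bar>^2 \<le> M^2" using pM[of x] by (intro power_mono) auto
        then show "norm (indicat_real {0..1} x *\<^sub>R (p x)\<^sup>2) \<le> M^2"
          by (simp add: indicator_def)
      qed
      show "AE x in lebesgue. x \<notin> {0..1} \<longrightarrow> indicat_real {0..1} x *\<^sub>R (p x)\<^sup>2 = 0"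
        by (simp add: indicator_def)
    qed
  qed
  have uniq: "AE x in lebesgue. f x = p x"
    if f: "f \<in> LinfL2P" and fe: "AE x in lebesgue. f x - a * f (real N * x) = g x" for f
  proof -
    obtain B where B: "AE x in lebesgue. \<bar>f x\<bar> \<le> B" using f unfolding LinfL2P_def by auto
    define h where "h x = f x - p x" for x
    have hrec: "AE x in lebesgue. h x = a * h (real N * x)"
      using fe AEp by eventually_elim (simp add: h_def algebra_simps)
    have hb: "AE x in lebesgue. \<bar>h x\<bar> \<le> \<bar>a\<bar>^k * (B + M)" for k
    proof (induction k)
      case 0
      show ?case using B by eventually_elim (use pM in \<open>simp add: h_def; smt (verit)\<close>)
    next
      case (Suc k)
      have "AE x in lebesgue. \<bar>h (real N * x)\<bar> \<le> \<bar>a\<bar>^k * (B + M)"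
        using AE_scale[OF Suc] Npos by simp
      then show ?case using hrec
      proof eventually_elim
        case (elim x)
        have "\<bar>h x\<bar> = \<bar>a\<bar> * \<bar>h (real N * x)\<bar>" using elim(2) by (simp add: abs_mult)
        also have "\<dots> \<le> \<bar>a\<bar> * (\<bar>a\<bar>^k * (B + M))" using elim(1) by (intro mult_left_mono) auto
        finally show ?case by simp
      qed
    qed
    then have "AE x in lebesgue. \<forall>k. \<bar>h x\<bar> \<le> \<bar>a\<bar>^k * (B + M)"
      by (simp add: AE_all_countable)
    then show ?thesis
    proof eventually_elim
      case (elim x)
      have lim: "(\<lambda>k. \<bar>a\<bar>^k * (B + M)) \<longlonglongrightarrow> 0"
        by (rule tendsto_mult_left_zero) (rule LIMSEQ_power_zero, use a_lt in simp)
      have "\<bar>h x\<bar> \<le> 0"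
        by (rule LIMSEQ_le_const[OF lim]) (use elim in auto)
      then show ?case by (simp add: h_def)
    qed
  qed
  show ?thesis
    using pin AEp uniq unfolding p_def g_def by blast
qed

end
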